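(* Let $\mathcal{B}$ be a $d$-dimensional manifold with a torsion-free flat connection $\nabla$, let $F\in C^\infty(\mathcal{B})$ and $b\in\mathcal{B}$. Then $F$ satisfies the Bryuno condition at $b$ if and only if it satisfies Condition N at $b$.
   Context: $F''=\nabla\nabla F$ is the (symmetric) Hessian, $\mathcal{K}_b=\ker dF_b\subset T_b\mathcal{B}$. In flat (affine) local coordinates $\xi_1,\dots,\xi_d$ (coordinates with $\nabla$-parallel differentials), $F''$ has components $\partial^2F/\partial\xi_j\partial\xi_k$. Bryuno condition at $b$: the linear map $\mathbf{U}:T_b\mathcal{B}\oplus\mathbb{R}\to T_b^*\mathcal{B}$, $\mathbf{U}(X,\alpha)=\nabla_X\nabla F+\alpha\,dF_b$, has rank $d$; equivalently, if $X,Y\in T_b\mathcal{B}$ satisfy $\nabla_X\nabla F\propto dF_b$ and $\nabla_Y\nabla F\propto dF_b$ then $X\propto Y$ ($\propto$ meaning linearly dependent); in coordinates, the $d\times(d+1)$ matrix $\big[\partial^2F/\partial\xi_j\partial\xi_k \;\big|\; \partial F/\partial\xi_j\big]$ has rank $d$. Condition N at $b$: $X\in\mathcal{K}_b$ and $\nabla_X\nabla F=0$ imply $X=0$; equivalently the map $\mathbf{V}:T_b\mathcal{B}\to T_b^*\mathcal{B}\oplus\mathbb{R}$, $\mathbf{V}(X)=(\nabla_X\nabla F,dF_b(X))$, has rank $d$; in coordinates, the $(d+1)\times d$ matrix obtained by appending the row $(\partial F/\partial\xi_k)_k$ below the Hessian matrix has rank $d$. *)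

theory Defs
  imports "HOL-Analysis.Analysis"
begin

text \<open>Local model: a neighbourhood of b in the affine manifold B, read in flat
  (affine) coordinates xi_1..xi_d, i.e. an open subset of real^'n with d = CARD('n).\<close>

definition pderiv_coord :: "'n::finite \<Rightarrow> (real^'n \<Rightarrow> real) \<Rightarrow> real^'n \<Rightarrow> real" where
  "pderiv_coord j f x = frechet_derivative f (at x) (axis j 1)"

fun Ck_on :: "nat \<Rightarrow> (real^'n::finite \<Rightarrow> real) \<Rightarrow> (real^'n) set \<Rightarrow> bool" where
  "Ck_on 0 f S = continuous_on S f"
| "Ck_on (Suc k) f S =
     (continuous_on S f \<and> f differentiable_on S \<and> (\<forall>j. Ck_on k (pderiv_coord j f) S))"

definition smooth_on :: "(real^'n::finite \<Rightarrow> real) \<Rightarrow> (real^'n) set \<Rightarrow> bool" where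
  "smooth_on f S \<longleftrightarrow> (\<forall>k. Ck_on k f S)"

definition grad_coord :: "(real^'n::finite \<Rightarrow> real) \<Rightarrow> real^'n \<Rightarrow> real^'n" where
  "grad_coord F b = (\<chi> j. pderiv_coord j F b)"

text \<open>Components of the Hessian F'' = nabla nabla F in flat coordinates: d^2F/dxi_j dxi_k.\<close>
definition hess_coord :: "(real^'n::finite \<Rightarrow> real) \<Rightarrow> real^'n \<Rightarrow> real^'n^'n" where
  "hess_coord F b = (\<chi> j k. pderiv_coord j (pderiv_coord k F) b)"

definition bryuno_cond :: "(real^'n::finite \<Rightarrow> real) \<Rightarrow> real^'n \<Rightarrow> bool" where
  "bryuno_cond F b \<longleftrightarrow>
     dim (range (\<lambda>(X :: real^'n, \<alpha> :: real). hess_coord F b *v X + \<alpha> *\<^sub>R grad_coord F b))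
       = CARD('n)"

definition condition_N :: "(real^'n::finite \<Rightarrow> real) \<Rightarrow> real^'n \<Rightarrow> bool" where
  "condition_N F b \<longleftrightarrow>
     (\<forall>X :: real^'n. grad_coord F b \<bullet> X = 0 \<and> hess_coord F b *v X = 0 \<longrightarrow> X = 0)"

end

theory Submission
  imports Defs
begin
lemma rcomm: "(a::'a::ab_semigroup_add) + b + c = a + c + b"
  by (metis add.assoc add.commute)

lemma dir_deriv:
  fixes f :: "real^'n::finite \<Rightarrow> real"
  assumes "f differentiable (at (p + t *\<^sub>R v))"
  shows "((\<lambda>s. f (p + s *\<^sub>R v)) has_real_derivative frechet_derivative f (at (p + t *\<^sub>R v)) v) (at t)"
proof -
  let ?D = "frechet_derivative f (at (p + t *\<^sub>R v))"
  have d: "(f has_derivative ?D) (at (p + t *\<^sub>R v))" using assms frechet_derivative_works by blast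
  have l: "((\<lambda>s. p + s *\<^sub>R v) has_derivative (\<lambda>s. s *\<^sub>R v)) (at t)"
    by (auto intro!: derivative_eq_intros)
  have c: "((\<lambda>s. f (p + s *\<^sub>R v)) has_derivative (\<lambda>s. ?D (s *\<^sub>R v))) (at t)"
    using has_derivative_compose[OF l d] by simp
  have lin: "linear ?D" using has_derivative_linear[OF d] .
  have "(\<lambda>s. ?D (s *\<^sub>R v)) = (\<lambda>s. ?D v * s)"
    using linear_scale[OF lin] by (auto simp: mult.commute)
  with c show ?thesis by (simp add: has_field_derivative_def)
qed

lemma inball:
  fixes b :: "real^'n::finite"
  assumes "\<bar>s\<bar> \<le> h" "\<bar>t\<bar> \<le> h" "2*h < e"
  shows "b + s *\<^sub>R axis j 1 + t *\<^sub>R axis k 1 \<in> ball b e"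
proof -
  have "norm (s *\<^sub>R axis j (1::real) + t *\<^sub>R axis k 1) \<le> norm (s *\<^sub>R axis j (1::real)) + norm (t *\<^sub>R axis k (1::real))"
    by (rule norm_triangle_ineq)
  also have "\<dots> = \<bar>s\<bar> + \<bar>t\<bar>" by simp
  finally have "norm (s *\<^sub>R axis j (1::real) + t *\<^sub>R axis k 1) < e" using assms by linarith
  moreover have "dist b (b + s *\<^sub>R axis j 1 + t *\<^sub>R axis k 1) = norm (s *\<^sub>R axis j (1::real) + t *\<^sub>R axis k 1)"
    by (simp add: dist_norm add.assoc norm_minus_commute add.commute)
  ultimately show ?thesis by simp
qed

lemma mixed:
  fixes F :: "real^'n::finite \<Rightarrow> real"
  assumes dF: "\<forall>x\<in>ball b e. F differentiable (at x)"
    and dG: "\<forall>x\<in>ball b e. pderiv_coord j F differentiable (at x)"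
    and h: "0 < h" "2*h < e"
  shows "\<exists>\<sigma> \<tau>. 0 < \<sigma> \<and> \<sigma> < h \<and> 0 < \<tau> \<and> \<tau> < h \<and>
     F (b + h *\<^sub>R axis j 1 + h *\<^sub>R axis k 1) - F (b + h *\<^sub>R axis j 1) - F (b + h *\<^sub>R axis k 1) + F b
     = h * h * pderiv_coord k (pderiv_coord j F) (b + \<sigma> *\<^sub>R axis j 1 + \<tau> *\<^sub>R axis k 1)"
proof -
  define ej :: "real^'n" where "ej = axis j 1"
  define ek :: "real^'n" where "ek = axis k 1"
  have inb: "b + s *\<^sub>R ej + t *\<^sub>R ek \<in> ball b e" if "\<bar>s\<bar> \<le> h" "\<bar>t\<bar> \<le> h" for s t
    using inball[OF that h(2)] by (simp add: ej_def ek_def)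
  define \<phi> where "\<phi> s = F ((b + h *\<^sub>R ek) + s *\<^sub>R ej) - F (b + s *\<^sub>R ej)" for s
  define \<phi>' where "\<phi>' s = pderiv_coord j F ((b + h *\<^sub>R ek) + s *\<^sub>R ej) - pderiv_coord j F (b + s *\<^sub>R ej)" for s
  have "DERIV \<phi> s :> \<phi>' s" if "0 \<le> s" "s \<le> h" for s
  proof -
    have m1: "(b + h *\<^sub>R ek) + s *\<^sub>R ej \<in> ball b e" unfolding rcomm[of b "h *\<^sub>R ek" "s *\<^sub>R ej"] using inb[of s h] that h by simp
    have m2: "b + s *\<^sub>R ej \<in> ball b e" using inb[of s 0] that h by simp
    show ?thesis unfolding \<phi>_def[abs_def] \<phi>'_def pderiv_coord_def ej_def
      by (intro DERIV_diff dir_deriv) (use dF m1 m2 in \<open>auto simp: ej_def\<close>)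
  qed
  then obtain \<sigma> where s: "0 < \<sigma>" "\<sigma> < h" "\<phi> h - \<phi> 0 = (h - 0) * \<phi>' \<sigma>"
    using MVT2[OF h(1), of \<phi> \<phi>'] by auto
  define \<psi> where "\<psi> t = pderiv_coord j F ((b + \<sigma> *\<^sub>R ej) + t *\<^sub>R ek)" for t
  define \<psi>' where "\<psi>' t = pderiv_coord k (pderiv_coord j F) ((b + \<sigma> *\<^sub>R ej) + t *\<^sub>R ek)" for t
  have "DERIV \<psi> t :> \<psi>' t" if "0 \<le> t" "t \<le> h" for t
  proof -
    have m1: "(b + \<sigma> *\<^sub>R ej) + t *\<^sub>R ek \<in> ball b e" using inb[of \<sigma> t] that s by simp
    show ?thesis unfolding \<psi>_def[abs_def] \<psi>'_def pderiv_coord_def[of k] ek_def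
      by (intro dir_deriv) (use dG m1 in \<open>auto simp: ek_def\<close>)
  qed
  then obtain \<tau> where t: "0 < \<tau>" "\<tau> < h" "\<psi> h - \<psi> 0 = (h - 0) * \<psi>' \<tau>"
    using MVT2[OF h(1), of \<psi> \<psi>'] by auto
  have "\<phi>' \<sigma> = \<psi> h - \<psi> 0" unfolding \<phi>'_def \<psi>_def rcomm[of b "h *\<^sub>R ek" "\<sigma> *\<^sub>R ej"] by simp
  then have "\<phi> h - \<phi> 0 = h * h * \<psi>' \<tau>" using s(3) t(3) by simp
  moreover have "\<phi> h - \<phi> 0 = F (b + h *\<^sub>R ej + h *\<^sub>R ek) - F (b + h *\<^sub>R ej) - F (b + h *\<^sub>R ek) + F b"
    unfolding \<phi>_def rcomm[of b "h *\<^sub>R ek" "h *\<^sub>R ej"] by simp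
  ultimately show ?thesis using s t unfolding \<psi>'_def ej_def ek_def by (intro exI[of _ \<sigma>] exI[of _ \<tau>]) auto
qed

lemma aux: "(x::real) = y \<Longrightarrow> \<bar>x - A\<bar> < \<bar>A - B\<bar>/2 \<Longrightarrow> \<bar>y - B\<bar> < \<bar>A - B\<bar>/2 \<Longrightarrow> False"
  by (simp add: abs_if split: if_splits)

lemma sym_entry:
  fixes F :: "real^'n::finite \<Rightarrow> real"
  assumes U: "open U" "b \<in> U" and sm: "smooth_on F U"
  shows "pderiv_coord k (pderiv_coord j F) b = pderiv_coord j (pderiv_coord k F) b"
proof (rule ccontr)
  let ?c1 = "pderiv_coord k (pderiv_coord j F)"
  let ?c2 = "pderiv_coord j (pderiv_coord k F)"
  assume ne: "?c1 b \<noteq> ?c2 b"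
  have "Ck_on (Suc (Suc (Suc 0))) F U" using sm unfolding smooth_on_def by blast
  then have C: "F differentiable_on U" "\<And>i. pderiv_coord i F differentiable_on U"
    "\<And>i l. continuous_on U (pderiv_coord l (pderiv_coord i F))" by simp_all
  have dF: "\<forall>x\<in>U. F differentiable (at x)" using C(1) U(1) differentiable_on_eq_differentiable_at by blast
  have dG: "\<forall>x\<in>U. pderiv_coord i F differentiable (at x)" for i
    using C(2) U(1) differentiable_on_eq_differentiable_at by blast
  define \<epsilon> where "\<epsilon> = \<bar>?c1 b - ?c2 b\<bar> / 2"
  have ep: "\<epsilon> > 0" using ne by (simp add: \<epsilon>_def)
  have "\<forall>e>0. \<exists>d>0. \<forall>x'\<in>U. dist x' b < d \<longrightarrow> dist (?c1 x') (?c1 b) < e"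
    using C(3)[of k j, unfolded continuous_on_iff] U(2) by (rule bspec)
  from this[rule_format, OF ep] obtain d1 where d1: "d1 > 0" "\<forall>x\<in>U. dist x b < d1 \<longrightarrow> dist (?c1 x) (?c1 b) < \<epsilon>"
    by blast
  have "\<forall>e>0. \<exists>d>0. \<forall>x'\<in>U. dist x' b < d \<longrightarrow> dist (?c2 x') (?c2 b) < e"
    using C(3)[of j k, unfolded continuous_on_iff] U(2) by (rule bspec)
  from this[rule_format, OF ep] obtain d2 where d2: "d2 > 0" "\<forall>x\<in>U. dist x b < d2 \<longrightarrow> dist (?c2 x) (?c2 b) < \<epsilon>"
    by blast
  obtain e where e: "e > 0" "ball b e \<subseteq> U" using U open_contains_ball by blast
  define r where "r = min e (min d1 d2)"
  define h where "h = r / 4"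
  have r: "r > 0" "r \<le> e" "r \<le> d1" "r \<le> d2" using e d1 d2 by (auto simp: r_def)
  have h: "0 < h" "2*h < e" using r by (auto simp: h_def)
  obtain \<sigma> \<tau> where st: "0 < \<sigma>" "\<sigma> < h" "0 < \<tau>" "\<tau> < h"
    "F (b + h *\<^sub>R axis j 1 + h *\<^sub>R axis k 1) - F (b + h *\<^sub>R axis j 1) - F (b + h *\<^sub>R axis k 1) + F b
     = h * h * ?c1 (b + \<sigma> *\<^sub>R axis j 1 + \<tau> *\<^sub>R axis k 1)"
    using mixed[of b e F j h k] dF dG[of j] e h by blast
  obtain \<sigma>' \<tau>' where st': "0 < \<sigma>'" "\<sigma>' < h" "0 < \<tau>'" "\<tau>' < h"
    "F (b + h *\<^sub>R axis k 1 + h *\<^sub>R axis j 1) - F (b + h *\<^sub>R axis k 1) - F (b + h *\<^sub>R axis j 1) + F b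
     = h * h * ?c2 (b + \<sigma>' *\<^sub>R axis k 1 + \<tau>' *\<^sub>R axis j 1)"
    using mixed[of b e F k h j] dF dG[of k] e h by blast
  have "h * h * ?c1 (b + \<sigma> *\<^sub>R axis j 1 + \<tau> *\<^sub>R axis k 1) = h * h * ?c2 (b + \<sigma>' *\<^sub>R axis k 1 + \<tau>' *\<^sub>R axis j 1)"
    using st(5) st'(5) unfolding rcomm[of b "h *\<^sub>R axis k 1" "h *\<^sub>R axis j 1"] by linarith
  then have eq: "?c1 (b + \<sigma> *\<^sub>R axis j 1 + \<tau> *\<^sub>R axis k 1) = ?c2 (b + \<sigma>' *\<^sub>R axis k 1 + \<tau>' *\<^sub>R axis j 1)"
    using h by simp
  have h2: "2*h < r" using r by (simp add: h_def)
  have p1: "b + \<sigma> *\<^sub>R axis j 1 + \<tau> *\<^sub>R axis k 1 \<in> ball b r"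
    using inball[of \<sigma> h \<tau> r b j k] st h2 by simp
  have p2: "b + \<sigma>' *\<^sub>R axis k 1 + \<tau>' *\<^sub>R axis j 1 \<in> ball b r"
    using inball[of \<sigma>' h \<tau>' r b k j] st' h2 by simp
  have "ball b r \<subseteq> U" using e r by auto
  then have u1: "b + \<sigma> *\<^sub>R axis j 1 + \<tau> *\<^sub>R axis k 1 \<in> U"
    and u2: "b + \<sigma>' *\<^sub>R axis k 1 + \<tau>' *\<^sub>R axis j 1 \<in> U" using p1 p2 by blast+
  have q1: "dist (b + \<sigma> *\<^sub>R axis j 1 + \<tau> *\<^sub>R axis k 1) b < d1"
    using p1 r(3) unfolding mem_ball dist_commute[of b] by linarith
  have q2: "dist (b + \<sigma>' *\<^sub>R axis k 1 + \<tau>' *\<^sub>R axis j 1) b < d2"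
    using p2 r(4) unfolding mem_ball dist_commute[of b] by linarith
  have "dist (?c1 (b + \<sigma> *\<^sub>R axis j 1 + \<tau> *\<^sub>R axis k 1)) (?c1 b) < \<epsilon>"
    using d1(2) u1 q1 by blast
  moreover have "dist (?c2 (b + \<sigma>' *\<^sub>R axis k 1 + \<tau>' *\<^sub>R axis j 1)) (?c2 b) < \<epsilon>"
    using d2(2) u2 q2 by blast
  ultimately show False using eq unfolding \<epsilon>_def dist_real_def by (intro aux) auto
qed

lemma hess_sym:
  fixes F :: "real^'n::finite \<Rightarrow> real"
  assumes "open U" "b \<in> U" "smooth_on F U"
  shows "transpose (hess_coord F b) = hess_coord F b"
  using sym_entry[OF assms]
  by (simp add: vec_eq_iff transpose_def hess_coord_def)

lemma la:
  fixes H :: "real^'n^'n" and g :: "real^'n"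
  assumes sym: "transpose H = H"
  shows "dim (range (\<lambda>(X :: real^'n, \<alpha> :: real). H *v X + \<alpha> *\<^sub>R g)) = CARD('n)
     \<longleftrightarrow> (\<forall>X :: real^'n. g \<bullet> X = 0 \<and> H *v X = 0 \<longrightarrow> X = 0)"
  (is "dim ?S = _ \<longleftrightarrow> _")
proof -
  have key: "X \<bullet> (H *v Y) = (H *v X) \<bullet> Y" for X Y
  proof -
    have "X \<bullet> (H *v Y) = (X v* H) \<bullet> Y" by (simp add: dot_lmul_matrix)
    also have "X v* H = H *v X" using transpose_matrix_vector[of H X] sym by simp
    finally show ?thesis .
  qed
  have sub: "subspace ?S"
  proof -
    have "linear (\<lambda>(X :: real^'n, \<alpha> :: real). H *v X + \<alpha> *\<^sub>R g)"
      by (auto simp: linear_iff matrix_vector_right_distrib algebra_simps matrix_vector_mult_scaleR)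
    then show ?thesis by (metis linear_subspace_image subspace_UNIV)
  qed
  have eq: "dim ?S = CARD('n) \<longleftrightarrow> ?S = UNIV"
  proof -
    have "dim ?S = CARD('n) \<longleftrightarrow> span ?S = UNIV" using dim_eq_full[of ?S] by (simp add: dim_vec_eq)
    moreover have "span ?S = ?S" using span_eq_iff[of ?S] sub by blast
    ultimately show ?thesis by simp
  qed
  show ?thesis
  proof
    assume "dim ?S = CARD('n)"
    then have full: "?S = UNIV" using eq by simp
    show "\<forall>X. g \<bullet> X = 0 \<and> H *v X = 0 \<longrightarrow> X = 0"
    proof (intro allI impI)
      fix X assume a: "g \<bullet> X = 0 \<and> H *v X = 0"
      have "X \<in> ?S" using full by simp
      then obtain Y \<alpha> where XY: "X = H *v Y + \<alpha> *\<^sub>R g" by auto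
      have "X \<bullet> X = X \<bullet> (H *v Y) + \<alpha> * (X \<bullet> g)" 
        by (subst (2) XY) (simp add: inner_add_right)
      also have "\<dots> = 0" using a key[of X Y] by (simp add: inner_commute)
      finally show "X = 0" by simp
    qed
  next
    assume N: "\<forall>X. g \<bullet> X = 0 \<and> H *v X = 0 \<longrightarrow> X = 0"
    show "dim ?S = CARD('n)"
    proof (rule ccontr)
      assume "dim ?S \<noteq> CARD('n)"
      then have "dim ?S < DIM(real^'n)" using dim_subset_UNIV_cart[of ?S] by simp
      then obtain X where X: "X \<noteq> 0" "\<And>y. y \<in> span ?S \<Longrightarrow> orthogonal X y"
        using orthogonal_to_subspace_exists by blast
      have o: "X \<bullet> (H *v Y + \<alpha> *\<^sub>R g) = 0" for Y \<alpha>
        using X(2)[of "H *v Y + \<alpha> *\<^sub>R g"] span_superset[of ?S]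
        by (auto simp: orthogonal_def)
      have "X \<bullet> g = 0" using o[of 0 1] by simp
      moreover have "(H *v X) \<bullet> (H *v X) = 0" using o[of "H *v X" 0] key[of X "H *v X"] by simp
      ultimately show False using N X(1) by (simp add: inner_commute)
    qed
  qed
qed

theorem mainTheorem2:
  fixes F :: "real^'n::finite \<Rightarrow> real" and U :: "(real^'n) set" and b :: "real^'n"
  assumes "open U" and "b \<in> U" and "smooth_on F U"
  shows "bryuno_cond F b \<longleftrightarrow> condition_N F b"
proof -
  have s: "transpose (hess_coord F b) = hess_coord F b" by (rule hess_sym[OF assms])
  show ?thesis unfolding bryuno_cond_def condition_N_def by (rule la[OF s, of "grad_coord F b"])
qed

end
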